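(* Let $\mathbf i,\mathbf i'\in I^{(\infty)}$ be related by a 4-move $\mathbf i'=\eta_k\mathbf i$. Then $$\Lambda^{\mathbf i'}=\sigma_{k+2}\sigma_k\,\mu_k\mu_{k+1}\mu_k\,\Lambda^{\mathbf i},$$ where the mutations of $\Lambda$ are performed jointly with those of $\widetilde B^{\mathbf i}$ (i.e. $(\Lambda^{\mathbf i'},\widetilde B^{\mathbf i'})=\sigma_{k+2}\sigma_k\mu_k\mu_{k+1}\mu_k(\Lambda^{\mathbf i},\widetilde B^{\mathbf i})$ in the first component).
   Context: Let $\mathfrak g$ be a complex finite-dimensional simple Lie algebra with index set $I$, Cartan matrix $\mathsf C=(\mathsf c_{i,j})_{i,j\in I}$, simple roots $\alpha_i$, fundamental weights $\varpi_i$, Weyl group $W$ generated by simple reflections $s_i$, and $W$-invariant symmetric bilinear form $(\cdot,\cdot)$ on the weight lattice with $(\alpha_i,\alpha_j)=\mathsf d_i\mathsf c_{i,j}$, where $\mathrm{diag}(\mathsf d_i)$ is the minimal positive integral left symmetrizer of $\mathsf C$. Write $\mathbb N=\{1,2,\dots\}$, $[a]_+=\max(a,0)$. $I^{(\infty)}$ is the set of sequences $\mathbf i=(i_u)_{u\in\mathbb N}\in I^{\mathbb N}$ in which every element of $I$ occurs infinitely often. For $u\in\mathbb N$: $u^+=u^+_{\mathbf i}=\min\{v>u:i_v=i_u\}$, $u^-=u^-_{\mathbf i}=\max(\{v<u:i_v=i_u\}\cup\{0\})$, $w_u=w^{\mathbf i}_u=s_{i_1}\cdots s_{i_u}$. The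 exchange matrix $\widetilde B^{\mathbf i}=(b_{u,v})_{u,v\in\mathbb N}$: $b_{u,v}=1$ if $v=u^+$; $-1$ if $v=u^-$; $\mathsf c_{i_u,i_v}$ if $u<v<u^+<v^+$; $-\mathsf c_{i_u,i_v}$ if $v<u<v^+<u^+$; $0$ otherwise. The skew-symmetric matrix $\Lambda^{\mathbf i}$: $\Lambda_{u,v}=-\Lambda_{v,u}=(\varpi_{i_u}-w_u\varpi_{i_u},\varpi_{i_v}+w_v\varpi_{i_v})$ for $u\le v$. Mutation: for $k\in\mathbb N$, $\mu_k(\Lambda,\widetilde B)=(E^T\Lambda E,E\widetilde BF)$ where, with $\widetilde B=(b_{u,v})$, $e_{u,v}=\delta_{u,v}$ ($v\neq k$), $e_{k,k}=-1$, $e_{u,k}=[-b_{u,k}]_+$ ($u\ne k$); $f_{u,v}=\delta_{u,v}$ ($u\ne k$), $f_{k,k}=-1$, $f_{k,v}=[b_{k,v}]_+$ ($v\ne k$). For a permutation $\pi$ of $\mathbb N$, $(\pi\Lambda)_{u,v}=\Lambda_{\pi^{-1}(u),\pi^{-1}(v)}$, $(\pi\widetilde B)_{u,v}=b_{\pi^{-1}(u),\pi^{-1}(v)}$; $\sigma_k$ is the transposition of $k$ and $k+1$. Composites of operators act right to left, each mutation using the exchange matrix produced by the previous steps. A 4-move: $\mathbf i'=\eta_k\mathbf i$ means $i_k=i_{k+2}=i'_{k+1}=i'_{k+3}$, $i_{k+1}=i_{k+3}=i'_k=i'_{k+2}$, $i_u=i'_u$ for $u\notin[k,k+3]$, and $\mathsf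 c_{i_{k+1},i_k}\mathsf c_{i_k,i_{k+1}}=2$. *)

theory Defs
  imports Complex_Main "HOL-Library.Groups_Big_Fun" "HOL-Combinatorics.Transposition" "HOL-Library.Function_Algebras"
begin

text \<open>Cartan data. The index set I is a finite type 'i. A weight is given by its
coordinates in the basis of fundamental weights, i.e. a function 'i \<Rightarrow> int.\<close>

definition cartan_of_simple_lie_algebra :: "('i::finite \<Rightarrow> 'i \<Rightarrow> int) \<Rightarrow> bool" where
  "cartan_of_simple_lie_algebra C \<longleftrightarrow>
     (\<forall>i. C i i = 2) \<and>
     (\<forall>i j. i \<noteq> j \<longrightarrow> C i j \<le> 0) \<and>
     (\<forall>i j. C i j = 0 \<longleftrightarrow> C j i = 0) \<and>
     \<comment> \<open>indecomposable\<close>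
     (\<forall>J. J \<noteq> {} \<and> J \<noteq> UNIV \<longrightarrow> (\<exists>i\<in>J. \<exists>j\<in>- J. C i j \<noteq> 0)) \<and>
     \<comment> \<open>of finite type: symmetrizable with positive definite symmetrization\<close>
     (\<exists>d::'i \<Rightarrow> int. (\<forall>i. d i > 0) \<and> (\<forall>i j. d i * C i j = d j * C j i) \<and>
        (\<forall>x::'i \<Rightarrow> real. (\<exists>i. x i \<noteq> 0) \<longrightarrow>
            (\<Sum>i\<in>UNIV. \<Sum>j\<in>UNIV. x i * of_int (d i * C i j) * x j) > 0))"

definition is_left_symmetrizer :: "('i \<Rightarrow> 'i \<Rightarrow> int) \<Rightarrow> ('i \<Rightarrow> int) \<Rightarrow> bool" where
  "is_left_symmetrizer C d \<longleftrightarrow> (\<forall>i. d i > 0) \<and> (\<forall>i j. d i * C i j = d j * C j i)"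

definition is_min_symmetrizer :: "('i \<Rightarrow> 'i \<Rightarrow> int) \<Rightarrow> ('i \<Rightarrow> int) \<Rightarrow> bool" where
  "is_min_symmetrizer C d \<longleftrightarrow> is_left_symmetrizer C d \<and>
     (\<forall>d'. is_left_symmetrizer C d' \<longrightarrow> (\<forall>i. d i \<le> d' i))"

definition fund_wt :: "'i \<Rightarrow> ('i \<Rightarrow> int)" where
  "fund_wt i = (\<lambda>j. if j = i then 1 else 0)"

definition simple_root :: "('i \<Rightarrow> 'i \<Rightarrow> int) \<Rightarrow> 'i \<Rightarrow> ('i \<Rightarrow> int)" where
  "simple_root C j = (\<lambda>i. C i j)"

text \<open>simple reflection s_i lambda = lambda - <alpha_i^vee, lambda> alpha_i\<close>
definition srefl :: "('i \<Rightarrow> 'i \<Rightarrow> int) \<Rightarrow> 'i \<Rightarrow> ('i \<Rightarrow> int) \<Rightarrow> ('i \<Rightarrow> int)" where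
  "srefl C i lam = (\<lambda>j. lam j - lam i * C j i)"

definition invariant_form ::
  "('i \<Rightarrow> 'i \<Rightarrow> int) \<Rightarrow> ('i \<Rightarrow> int) \<Rightarrow> (('i \<Rightarrow> int) \<Rightarrow> ('i \<Rightarrow> int) \<Rightarrow> rat) \<Rightarrow> bool" where
  "invariant_form C d form \<longleftrightarrow>
     (\<forall>x y z. form (x + y) z = form x z + form y z) \<and>
     (\<forall>x y. form x y = form y x) \<and>
     (\<forall>i x y. form (srefl C i x) (srefl C i y) = form x y) \<and>
     (\<forall>i j. form (simple_root C i) (simple_root C j) = of_int (d i * C i j))"

text \<open>Sequences i = (i_u)_{u \<in> N} are functions nat \<Rightarrow> 'i; the value at 0 is irrelevant.\<close>
definition in_I_infty :: "(nat \<Rightarrow> 'i) \<Rightarrow> bool" where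
  "in_I_infty s \<longleftrightarrow> (\<forall>a. infinite {u. 1 \<le> u \<and> s u = a})"

definition seq_plus :: "(nat \<Rightarrow> 'i) \<Rightarrow> nat \<Rightarrow> nat" where
  "seq_plus s u = (LEAST v. u < v \<and> s v = s u)"

definition seq_minus :: "(nat \<Rightarrow> 'i) \<Rightarrow> nat \<Rightarrow> nat" where
  "seq_minus s u = Max ({v. 0 < v \<and> v < u \<and> s v = s u} \<union> {0})"

fun weyl_act :: "('i \<Rightarrow> 'i \<Rightarrow> int) \<Rightarrow> (nat \<Rightarrow> 'i) \<Rightarrow> nat \<Rightarrow> ('i \<Rightarrow> int) \<Rightarrow> ('i \<Rightarrow> int)" where
  "weyl_act C s 0 lam = lam"
| "weyl_act C s (Suc u) lam = weyl_act C s u (srefl C (s (Suc u)) lam)"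

text \<open>Matrices indexed by N are functions nat \<Rightarrow> nat \<Rightarrow> _; index 0 carries the entry 0.\<close>
definition exch_matrix :: "('i \<Rightarrow> 'i \<Rightarrow> int) \<Rightarrow> (nat \<Rightarrow> 'i) \<Rightarrow> nat \<Rightarrow> nat \<Rightarrow> int" where
  "exch_matrix C s u v =
    (if u = 0 \<or> v = 0 then 0
     else if v = seq_plus s u then 1
     else if v = seq_minus s u then -1
     else if u < v \<and> v < seq_plus s u \<and> seq_plus s u < seq_plus s v then C (s u) (s v)
     else if v < u \<and> u < seq_plus s v \<and> seq_plus s v < seq_plus s u then - C (s u) (s v)
     else 0)"

definition Lambda_matrix ::
  "('i \<Rightarrow> 'i \<Rightarrow> int) \<Rightarrow> (('i \<Rightarrow> int) \<Rightarrow> ('i \<Rightarrow> int) \<Rightarrow> rat) \<Rightarrow> (nat \<Rightarrow> 'i) \<Rightarrow> nat \<Rightarrow> nat \<Rightarrow> rat" where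
  "Lambda_matrix C form s u v =
    (if u = 0 \<or> v = 0 then 0
     else if u \<le> v then
       form (fund_wt (s u) - weyl_act C s u (fund_wt (s u)))
            (fund_wt (s v) + weyl_act C s v (fund_wt (s v)))
     else
       - form (fund_wt (s v) - weyl_act C s v (fund_wt (s v)))
              (fund_wt (s u) + weyl_act C s u (fund_wt (s u))))"

text \<open>Product of N-indexed matrices (finitely supported sums, as in the paper's setting).\<close>
definition mat_mult :: "(nat \<Rightarrow> nat \<Rightarrow> 'a::comm_semiring_1) \<Rightarrow> (nat \<Rightarrow> nat \<Rightarrow> 'a) \<Rightarrow> nat \<Rightarrow> nat \<Rightarrow> 'a" where
  "mat_mult A B u v = (\<Sum>w. A u w * B w v)"

definition mat_transp :: "(nat \<Rightarrow> nat \<Rightarrow> 'a) \<Rightarrow> nat \<Rightarrow> nat \<Rightarrow> 'a" where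
  "mat_transp A u v = A v u"

definition mut_E :: "(nat \<Rightarrow> nat \<Rightarrow> int) \<Rightarrow> nat \<Rightarrow> nat \<Rightarrow> nat \<Rightarrow> int" where
  "mut_E B k u v =
    (if v \<noteq> k then (if u = v then 1 else 0)
     else if u = k then -1 else max (- B u k) 0)"

definition mut_F :: "(nat \<Rightarrow> nat \<Rightarrow> int) \<Rightarrow> nat \<Rightarrow> nat \<Rightarrow> nat \<Rightarrow> int" where
  "mut_F B k u v =
    (if u \<noteq> k then (if u = v then 1 else 0)
     else if v = k then -1 else max (B k v) 0)"

definition mutate :: "nat \<Rightarrow> (nat \<Rightarrow> nat \<Rightarrow> rat) \<times> (nat \<Rightarrow> nat \<Rightarrow> int)
                      \<Rightarrow> (nat \<Rightarrow> nat \<Rightarrow> rat) \<times> (nat \<Rightarrow> nat \<Rightarrow> int)" where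
  "mutate k LB = (let L = fst LB; B = snd LB;
                      E = mut_E B k; F = mut_F B k;
                      Eq = (\<lambda>u v. of_int (E u v) :: rat)
                  in (mat_mult (mat_transp Eq) (mat_mult L Eq), mat_mult (mat_mult E B) F))"

definition perm_mat :: "(nat \<Rightarrow> nat) \<Rightarrow> (nat \<Rightarrow> nat \<Rightarrow> 'a) \<Rightarrow> nat \<Rightarrow> nat \<Rightarrow> 'a" where
  "perm_mat p M u v = M (inv p u) (inv p v)"

definition perm_pair :: "(nat \<Rightarrow> nat) \<Rightarrow> (nat \<Rightarrow> nat \<Rightarrow> rat) \<times> (nat \<Rightarrow> nat \<Rightarrow> int)
                      \<Rightarrow> (nat \<Rightarrow> nat \<Rightarrow> rat) \<times> (nat \<Rightarrow> nat \<Rightarrow> int)" where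
  "perm_pair p LB = (perm_mat p (fst LB), perm_mat p (snd LB))"

definition sigma :: "nat \<Rightarrow> nat \<Rightarrow> nat" where
  "sigma k = transpose k (k + 1)"

definition four_move :: "('i \<Rightarrow> 'i \<Rightarrow> int) \<Rightarrow> nat \<Rightarrow> (nat \<Rightarrow> 'i) \<Rightarrow> (nat \<Rightarrow> 'i) \<Rightarrow> bool" where
  "four_move C k s s' \<longleftrightarrow>
     s k = s (k+2) \<and> s (k+2) = s' (k+1) \<and> s' (k+1) = s' (k+3) \<and>
     s (k+1) = s (k+3) \<and> s (k+3) = s' k \<and> s' k = s' (k+2) \<and>
     (\<forall>u. 1 \<le> u \<and> (u < k \<or> k + 3 < u) \<longrightarrow> s u = s' u) \<and>
     C (s (k+1)) (s k) * C (s k) (s (k+1)) = 2"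

end

theory Submission
  imports Defs
begin


lemma Sum_any_sup:
  fixes f :: "nat \<Rightarrow> 'a::comm_monoid_add"
  assumes "finite S" "\<And>w. w \<notin> S \<Longrightarrow> f w = 0"
  shows "(\<Sum>w. f w) = sum f S"
  using assms by (intro Sum_any.expand_superset) auto

lemma Sum_any_neg:
  fixes f :: "nat \<Rightarrow> 'a::ab_group_add"
  shows "(\<Sum>w. - f w) = - (\<Sum>w. f w)"
  by (simp add: Sum_any.expand_set sum_negf)

lemma Sum_any_delta_r: "(\<Sum>w. (f w::'a::comm_semiring_1) * (if w = v then 1 else 0)) = f v"
proof -
  have "(\<lambda>w. f w * (if w = v then 1 else 0)) = (\<lambda>w. if w = v then f w else 0)" by auto
  then show ?thesis by (metis Sum_any.delta)
qed

lemma Sum_any_delta_l: "(\<Sum>w. (if w = v then 1 else 0) * (f w::'a::comm_semiring_1)) = f v"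
proof -
  have "(\<lambda>w. (if w = v then 1 else 0) * f w) = (\<lambda>w. if w = v then f w else 0)" by auto
  then show ?thesis by (metis Sum_any.delta)
qed

definition ecol :: "(nat \<Rightarrow> nat \<Rightarrow> int) \<Rightarrow> nat \<Rightarrow> nat \<Rightarrow> rat" where
  "ecol B k w = of_int (mut_E B k w k)"

lemma mutate_fst:
  "fst (mutate k (L, B)) u v =
    (if u \<noteq> k then (if v \<noteq> k then L u v else Sum_any (\<lambda>w. L u w * ecol B k w))
     else Sum_any (\<lambda>w. ecol B k w * (if v \<noteq> k then L w v else Sum_any (\<lambda>x. L w x * ecol B k x))))"
proof -
  define Eq where "Eq = (\<lambda>u v. of_int (mut_E B k u v) :: rat)"
  have Eoff: "v \<noteq> k \<Longrightarrow> Eq w v = (if w = v then 1 else 0)" for w v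
    by (simp add: Eq_def mut_E_def)
  have LE: "mat_mult L Eq w v = (if v \<noteq> k then L w v else Sum_any (\<lambda>x. L w x * ecol B k x))" for w
  proof (cases "v = k")
    case True then show ?thesis by (simp add: mat_mult_def Eq_def ecol_def)
  next
    case False then show ?thesis by (simp add: mat_mult_def Eoff Sum_any_delta_r)
  qed
  have M: "fst (mutate k (L, B)) u v = Sum_any (\<lambda>w. Eq w u * mat_mult L Eq w v)"
    unfolding mutate_def Let_def Eq_def by (simp add: mat_mult_def[of "mat_transp _"] mat_transp_def)
  show ?thesis
  proof (cases "u = k")
    case True
    then show ?thesis unfolding M LE by (simp add: ecol_def Eq_def)
  next
    case False
    then show ?thesis unfolding M LE Eoff[OF False] Sum_any_delta_l using False by simp
  qed
qed

definition ebm :: "(nat \<Rightarrow> nat \<Rightarrow> int) \<Rightarrow> nat \<Rightarrow> nat \<Rightarrow> nat \<Rightarrow> int" where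
  "ebm B k u w = (if u = k then - B k w else B u w + max (- B u k) 0 * B k w)"

lemma mutate_snd:
  "snd (mutate k (L, B)) u v =
    (if v = k then - ebm B k u k else ebm B k u v + ebm B k u k * max (B k v) 0)"
proof -
  have EB: "mat_mult (mut_E B k) B u w = ebm B k u w" for w
  proof -
    have "mat_mult (mut_E B k) B u w = sum (\<lambda>x. mut_E B k u x * B x w) {u, k}"
      unfolding mat_mult_def by (rule Sum_any_sup) (auto simp: mut_E_def)
    then show ?thesis by (cases "u = k") (auto simp: mut_E_def ebm_def)
  qed
  have "snd (mutate k (L, B)) u v = sum (\<lambda>w. ebm B k u w * mut_F B k w v) {v, k}"
    unfolding mutate_def Let_def snd_conv mat_mult_def[of "mat_mult _ _"] EB
    by (rule Sum_any_sup) (auto simp: mut_F_def)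
  then show ?thesis by (cases "v = k") (auto simp: mut_F_def)
qed

definition skew :: "(nat \<Rightarrow> nat \<Rightarrow> rat) \<Rightarrow> bool" where
  "skew L \<longleftrightarrow> (\<forall>u v. L u v = - L v u)"

lemma skew_mutate:
  assumes sk: "skew L" and fin: "finite {w. ecol B k w \<noteq> 0}"
  shows "skew (fst (mutate k (L, B)))"
  unfolding skew_def
proof (intro allI)
  fix u v
  define S where "S = {w. ecol B k w \<noteq> 0}"
  have fS: "finite S" using fin S_def by simp
  have sum1: "Sum_any (\<lambda>w. f w * ecol B k w) = sum (\<lambda>w. f w * ecol B k w) S" for f :: "nat \<Rightarrow> rat"
    by (rule Sum_any_sup[OF fS]) (auto simp: S_def)
  have sum2: "Sum_any (\<lambda>w. ecol B k w * f w) = sum (\<lambda>w. ecol B k w * f w) S" for f :: "nat \<Rightarrow> rat"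
    by (rule Sum_any_sup[OF fS]) (auto simp: S_def)
  have L: "L a b = - L b a" for a b using sk unfolding skew_def by blast
  have diag: "sum (\<lambda>w. ecol B k w * sum (\<lambda>x. L w x * ecol B k x) S) S = 0"
  proof -
    let ?X = "sum (\<lambda>w. ecol B k w * sum (\<lambda>x. L w x * ecol B k x) S) S"
    have "?X = sum (\<lambda>w. sum (\<lambda>x. ecol B k w * L w x * ecol B k x) S) S"
      by (simp add: sum_distrib_left mult.assoc)
    also have "\<dots> = sum (\<lambda>x. sum (\<lambda>w. ecol B k w * L w x * ecol B k x) S) S"
      by (rule sum.swap)
    also have "\<dots> = sum (\<lambda>x. sum (\<lambda>w. - (ecol B k x * L x w * ecol B k w)) S) S"
    proof -
      have e: "ecol B k w * L w x * ecol B k x = - (ecol B k x * L x w * ecol B k w)" for w x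
        using L[of w x] by simp
      show ?thesis by (intro sum.cong refl) (rule e)
    qed
    also have "\<dots> = - ?X"
      by (simp add: sum_distrib_left sum_negf mult.assoc)
    finally show ?thesis by simp
  qed
  show "fst (mutate k (L, B)) u v = - fst (mutate k (L, B)) v u"
  proof -
    have a: "sum (\<lambda>w. L u w * ecol B k w) S = - sum (\<lambda>w. ecol B k w * L w u) S" for u
    proof -
      have e: "L u w * ecol B k w = - (ecol B k w * L w u)" for w using L[of u w] by simp
      show ?thesis unfolding sum_negf[symmetric] by (intro sum.cong refl) (rule e)
    qed
    show ?thesis
      unfolding mutate_fst sum1 sum2
      using diag L[of u v] a[of u] a[of v] by auto
  qed
qed




lemma inf_exists_after:
  assumes "in_I_infty s" shows "\<exists>v>u. s v = s u"
proof -
  have inf: "infinite {v. 1 \<le> v \<and> s v = s u}" using assms unfolding in_I_infty_def by (rule allE)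
  have "\<not> {v. 1 \<le> v \<and> s v = s u} \<subseteq> {..u}"
    using inf finite_subset[of _ "{..u}"] by auto
  then show ?thesis by (auto simp: not_le)
qed

lemma seq_plus_props:
  assumes "in_I_infty s"
  shows "u < seq_plus s u" "s (seq_plus s u) = s u"
    "\<And>t. u < t \<Longrightarrow> t < seq_plus s u \<Longrightarrow> s t \<noteq> s u"
proof -
  obtain v where v: "u < v \<and> s v = s u" using inf_exists_after[OF assms] by blast
  show "u < seq_plus s u" "s (seq_plus s u) = s u"
    using LeastI[of "\<lambda>v. u < v \<and> s v = s u", OF v] unfolding seq_plus_def by auto
  show "\<And>t. u < t \<Longrightarrow> t < seq_plus s u \<Longrightarrow> s t \<noteq> s u"
    using not_less_Least unfolding seq_plus_def by blast
qed

lemma seq_plus_eq: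
  assumes "u < v" "s v = s u" "\<And>t. u < t \<Longrightarrow> t < v \<Longrightarrow> s t \<noteq> s u"
  shows "seq_plus s u = v"
  unfolding seq_plus_def
proof (rule Least_equality)
  show "u < v \<and> s v = s u" using assms by auto
  show "\<And>y. u < y \<and> s y = s u \<Longrightarrow> v \<le> y" using assms(3) by (metis not_le)
qed

lemma seq_minus_props:
  shows "seq_minus s u = 0 \<or> (0 < seq_minus s u \<and> seq_minus s u < u \<and> s (seq_minus s u) = s u)"
    "\<And>t. seq_minus s u < t \<Longrightarrow> t < u \<Longrightarrow> s t \<noteq> s u"
proof -
  let ?A = "{v. 0 < v \<and> v < u \<and> s v = s u} \<union> {0}"
  have fin: "finite ?A" by (rule finite_subset[of _ "{..u}"]) auto
  have mem: "seq_minus s u \<in> ?A" unfolding seq_minus_def using fin by (intro Max_in) auto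
  then show "seq_minus s u = 0 \<or> (0 < seq_minus s u \<and> seq_minus s u < u \<and> s (seq_minus s u) = s u)"
    by auto
  show "\<And>t. seq_minus s u < t \<Longrightarrow> t < u \<Longrightarrow> s t \<noteq> s u"
  proof -
    fix t assume "seq_minus s u < t" "t < u"
    moreover have "x \<in> ?A \<Longrightarrow> x \<le> seq_minus s u" for x unfolding seq_minus_def using fin by auto
    ultimately show "s t \<noteq> s u" by (metis (mono_tags, lifting) CollectI UnI1 gr_zeroI leD less_nat_zero_code)
  qed
qed

lemma seq_minus_eq:
  assumes "v = 0 \<or> (0 < v \<and> v < u \<and> s v = s u)" "\<And>t. v < t \<Longrightarrow> t < u \<Longrightarrow> s t \<noteq> s u"
  shows "seq_minus s u = v"
proof -
  let ?A = "{v. 0 < v \<and> v < u \<and> s v = s u} \<union> {0}"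
  have fin: "finite ?A" by (rule finite_subset[of _ "{..u}"]) auto
  have "v \<in> ?A" using assms(1) by auto
  moreover have "x \<in> ?A \<Longrightarrow> x \<le> v" for x using assms(2) by (cases "x \<le> v") auto
  ultimately show ?thesis unfolding seq_minus_def using fin by (intro Max_eqI) auto
qed




definition sc :: "int \<Rightarrow> ('i \<Rightarrow> int) \<Rightarrow> ('i \<Rightarrow> int)" where
  "sc n x = (\<lambda>j. n * x j)"

lemma sc_simps:
  "sc n (x + y) = sc n x + sc n y" "sc n (x - y) = sc n x - sc n y" "sc n (- x) = - sc n x"
  "sc n (sc m x) = sc (n * m) x" "sc 1 x = x" "sc 0 x = 0" "sc n 0 = 0"
  by (auto simp: sc_def fun_eq_iff algebra_simps)

lemma srefl_lin:
  "srefl C i (x + y) = srefl C i x + srefl C i y"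
  "srefl C i (x - y) = srefl C i x - srefl C i y"
  "srefl C i (- x) = - srefl C i x"
  "srefl C i (sc n x) = sc n (srefl C i x)"
  "srefl C i 0 = 0"
  by (auto simp: srefl_def sc_def fun_eq_iff algebra_simps)

lemma srefl_fund: "srefl C i (fund_wt j) = (if j = i then fund_wt i - simple_root C i else fund_wt j)"
  by (auto simp: srefl_def fund_wt_def simple_root_def fun_eq_iff)

lemma srefl_root: "srefl C i (simple_root C j) = simple_root C j - sc (C i j) (simple_root C i)"
  by (auto simp: srefl_def sc_def simple_root_def fun_eq_iff)

lemma weyl_lin:
  "weyl_act C s n (x + y) = weyl_act C s n x + weyl_act C s n y"
  "weyl_act C s n (x - y) = weyl_act C s n x - weyl_act C s n y"
  "weyl_act C s n (- x) = - weyl_act C s n x"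
  "weyl_act C s n (sc m x) = sc m (weyl_act C s n x)"
  by (induction n arbitrary: x y) (auto simp: srefl_lin)

context
  fixes C :: "'i \<Rightarrow> 'i \<Rightarrow> int" and d :: "'i \<Rightarrow> int" and form
  assumes IF: "invariant_form C d form"
begin

lemma form_add1: "form (x + y) z = form x z + form y z" using IF unfolding invariant_form_def by blast
lemma form_sym: "form x y = form y x" using IF unfolding invariant_form_def by blast
lemma form_refl_inv: "form (srefl C i x) (srefl C i y) = form x y" using IF unfolding invariant_form_def by blast
lemma form_roots: "form (simple_root C i) (simple_root C j) = of_int (d i * C i j)"
  using IF unfolding invariant_form_def by blast

lemma form_add2: "form x (y + z) = form x y + form x z"
  using form_add1 form_sym by metis

lemma form_zero1: "form 0 z = 0"
  using form_add1[of 0 0 z] by simp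
lemma form_zero2: "form z 0 = 0"
  using form_zero1 form_sym by metis

lemma form_uminus1: "form (- x) z = - form x z"
  using form_add1[of x "- x" z] form_zero1 by (simp add: eq_neg_iff_add_eq_0)
lemma form_uminus2: "form z (- x) = - form z x"
  using form_uminus1 form_sym by metis

lemma form_diff1: "form (x - y) z = form x z - form y z"
  using form_add1[of x "- y" z] form_uminus1 by simp
lemma form_diff2: "form z (x - y) = form z x - form z y"
  using form_diff1 form_sym by metis

lemma form_sc_nat: "form (sc (int n) x) z = of_nat n * form x z"
proof (induction n)
  case 0
  have "sc (int 0) x = 0" by (simp add: sc_def fun_eq_iff)
  then show ?case by (simp only: form_zero1)
next
  case (Suc n)
  have e: "sc (int (Suc n)) x = sc (int n) x + x" by (auto simp: sc_def fun_eq_iff algebra_simps)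
  show ?case by (simp only: e form_add1 Suc.IH) (simp add: algebra_simps)
qed

lemma form_sc1: "form (sc n x) z = of_int n * form x z"
proof (cases "n \<ge> 0")
  case True
  define m where "m = nat n"
  have "n = int m" using True m_def by simp
  then show ?thesis using form_sc_nat by simp
next
  case False
  define m where "m = nat (- n)"
  have m: "n = - int m" using False m_def by simp
  have "sc n x = - sc (int m) x" using m by (auto simp: sc_def fun_eq_iff)
  then show ?thesis using form_sc_nat[of m x z] m by (simp add: form_uminus1)
qed
lemma form_sc2: "form z (sc n x) = of_int n * form z x"
  using form_sc1 form_sym by metis

lemmas form_lin = form_add1 form_add2 form_diff1 form_diff2 form_uminus1 form_uminus2 form_sc1 form_sc2
  form_zero1 form_zero2

lemma form_weyl: "form (weyl_act C s n x) (weyl_act C s n y) = form x y"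
  by (induction n arbitrary: x y) (auto simp: form_refl_inv)

lemma form_fund_root:
  assumes "C j j = 2"
  shows "form (fund_wt i) (simple_root C j) = (if i = j then of_int (d i) else 0)"
proof (cases "i = j")
  case False
  have "form (fund_wt i) (simple_root C j) = form (srefl C j (fund_wt i)) (srefl C j (simple_root C j))"
    by (simp add: form_refl_inv)
  also have "\<dots> = form (fund_wt i) (simple_root C j - sc 2 (simple_root C j))"
    using False assms by (simp add: srefl_fund srefl_root)
  also have "\<dots> = - form (fund_wt i) (simple_root C j)"
    by (simp add: form_lin)
  finally show ?thesis using False by simp
next
  case True
  have "form (fund_wt i) (fund_wt i) = form (srefl C i (fund_wt i)) (srefl C i (fund_wt i))"
    by (simp add: form_refl_inv)
  also have "\<dots> = form (fund_wt i) (fund_wt i) - 2 * form (fund_wt i) (simple_root C i)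
      + form (simple_root C i) (simple_root C i)"
    by (simp add: srefl_fund form_lin form_sym[of "simple_root C i" "fund_wt i"])
  finally show ?thesis using True assms by (simp add: form_roots)
qed

lemma swap_lemma:
  "form (x - weyl_act C s n x) (z + weyl_act C s n z) = - form (z - weyl_act C s n z) (x + weyl_act C s n x)"
proof -
  have "form x (weyl_act C s n z) = form (weyl_act C s n z) x"
    "form (weyl_act C s n x) z = form z (weyl_act C s n x)" "form z x = form x z"
    "form (weyl_act C s n z) (weyl_act C s n x) = form z x"
    "form (weyl_act C s n x) (weyl_act C s n z) = form x z"
    using form_sym form_weyl by metis+
  then show ?thesis by (simp add: form_lin)
qed

end

lemma weyl_fix:
  assumes "v \<le> u" "\<And>t. v < t \<Longrightarrow> t \<le> u \<Longrightarrow> s t \<noteq> c"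
  shows "weyl_act C s u (fund_wt c) = weyl_act C s v (fund_wt c)"
  using assms
proof (induction u)
  case 0 then show ?case by simp
next
  case (Suc u)
  show ?case
  proof (cases "v = Suc u")
    case True then show ?thesis by simp
  next
    case False
    then have "v \<le> u" using Suc by simp
    moreover have "c \<noteq> s (Suc u)" using Suc.prems(2)[of "Suc u"] Suc.prems(1) False by auto
    ultimately show ?thesis using Suc by (simp add: srefl_fund)
  qed
qed

lemma weyl_cong:
  assumes "\<And>t. 1 \<le> t \<Longrightarrow> t \<le> u \<Longrightarrow> s t = s' t"
  shows "weyl_act C s u = weyl_act C s' u"
  using assms by (induction u) (auto simp: fun_eq_iff)




lemma seq_minus_plus:
  assumes "in_I_infty s" "1 \<le> u"
  shows "seq_minus s (seq_plus s u) = u"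
  using seq_plus_props[OF assms(1)] assms(2) by (intro seq_minus_eq) auto

lemma seq_plus_minus:
  assumes "in_I_infty s" "seq_minus s v \<noteq> 0"
  shows "seq_plus s (seq_minus s v) = v"
  using seq_minus_props[of s v] assms(2) by (intro seq_plus_eq) auto

locale fm =
  fixes C :: "'i::finite \<Rightarrow> 'i \<Rightarrow> int" and d :: "'i \<Rightarrow> int"
    and form :: "('i \<Rightarrow> int) \<Rightarrow> ('i \<Rightarrow> int) \<Rightarrow> rat"
    and s s' :: "nat \<Rightarrow> 'i" and k :: nat
  assumes cartan: "cartan_of_simple_lie_algebra C"
    and symm: "is_min_symmetrizer C d"
    and IF: "invariant_form C d form"
    and infs: "in_I_infty s" and infs': "in_I_infty s'"
    and k1: "1 \<le> k"
    and fmv: "four_move C k s s'"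
begin

abbreviation "a \<equiv> s k"
abbreviation "b \<equiv> s (k+1)"
abbreviation "c \<equiv> C (s k) (s (k+1))"
abbreviation "c' \<equiv> C (s (k+1)) (s k)"

lemma seqs:
  "s (k+2) = a" "s (k+3) = b" "s' k = b" "s' (k+1) = a" "s' (k+2) = b" "s' (k+3) = a"
  using fmv unfolding four_move_def by auto

lemma seq_out: "1 \<le> u \<Longrightarrow> u < k \<or> k + 3 < u \<Longrightarrow> s' u = s u"
  using fmv unfolding four_move_def by auto

lemma Cdiag: "C i i = 2"
proof -
  have "\<forall>i. C i i = 2" using cartan unfolding cartan_of_simple_lie_algebra_def by (rule conjunct1)
  then show ?thesis by (rule spec)
qed

lemma Cneg: "i \<noteq> j \<Longrightarrow> C i j \<le> 0"
proof -
  have "\<forall>i j. i \<noteq> j \<longrightarrow> C i j \<le> 0"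
    using cartan unfolding cartan_of_simple_lie_algebra_def by (elim conjE)
  then show "i \<noteq> j \<Longrightarrow> C i j \<le> 0" by blast
qed

lemma cc: "c' * c = 2"
  using fmv unfolding four_move_def by auto

lemma ab: "a \<noteq> b"
proof
  assume "a = b"
  then have "c' * c = 4" using Cdiag[of a] by simp
  then show False using cc by simp
qed

lemma cneg: "c < 0" "c' < 0"
proof -
  have "c \<le> 0" "c' \<le> 0" using Cneg ab by auto
  moreover have "c \<noteq> 0" "c' \<noteq> 0" using cc by auto
  ultimately show "c < 0" "c' < 0" by auto
qed

lemma cc2: "c * c' = 2" using cc by (simp add: mult.commute)

lemma dsym: "d i * C i j = d j * C j i"
proof -
  have "\<forall>i j. d i * C i j = d j * C j i"
    using symm unfolding is_min_symmetrizer_def is_left_symmetrizer_def by (elim conjE)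
  then show ?thesis by blast
qed

definition "alpha = seq_minus s k"
definition "beta = seq_minus s (k+1)"

lemma alpha_props: "alpha < k" "alpha \<noteq> 0 \<Longrightarrow> s alpha = a"
  "\<And>t. alpha < t \<Longrightarrow> t < k \<Longrightarrow> s t \<noteq> a"
  using seq_minus_props[of s k] k1 unfolding alpha_def by auto

lemma beta_props: "beta < k" "beta \<noteq> 0 \<Longrightarrow> s beta = b"
  "\<And>t. beta < t \<Longrightarrow> t < k + 1 \<Longrightarrow> s t \<noteq> b"
proof -
  have h: "beta = 0 \<or> 0 < beta \<and> beta < k + 1 \<and> s beta = b"
    "\<And>t. beta < t \<Longrightarrow> t < k + 1 \<Longrightarrow> s t \<noteq> b"
    using seq_minus_props[of s "k+1"] unfolding beta_def by auto
  then show "beta \<noteq> 0 \<Longrightarrow> s beta = b" "\<And>t. beta < t \<Longrightarrow> t < k + 1 \<Longrightarrow> s t \<noteq> b" by auto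
  show "beta < k"
  proof (cases "beta = 0")
    case True then show ?thesis using k1 by simp
  next
    case False
    then have "beta < k + 1" "s beta = b" using h by auto
    then show ?thesis using ab by (cases "beta = k") auto
  qed
qed

lemma ab_dist: "alpha \<noteq> 0 \<Longrightarrow> alpha \<noteq> beta" "beta \<noteq> 0 \<Longrightarrow> beta \<noteq> alpha"
  using alpha_props beta_props ab by metis+

lemma between1: "k < t \<Longrightarrow> t < k + 2 \<Longrightarrow> t = k + 1" by arith
lemma between2: "k + 1 < t \<Longrightarrow> t < k + 3 \<Longrightarrow> t = k + 2" by arith

lemma plus_k: "seq_plus s k = k + 2"
proof (rule seq_plus_eq)
  show "\<And>t. k < t \<Longrightarrow> t < k + 2 \<Longrightarrow> s t \<noteq> s k" using between1 ab by metis
qed (use seqs in auto)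
lemma plus_k1: "seq_plus s (k+1) = k + 3"
proof (rule seq_plus_eq)
  show "\<And>t. k + 1 < t \<Longrightarrow> t < k + 3 \<Longrightarrow> s t \<noteq> s (k+1)" using between2 ab seqs by metis
qed (use seqs in auto)
lemma plus_k2: "k + 3 < seq_plus s (k+2)"
proof -
  have "k + 2 < seq_plus s (k+2)" "s (seq_plus s (k+2)) = a" using seq_plus_props[OF infs] seqs by auto
  moreover have "seq_plus s (k+2) \<noteq> k + 3" using seqs ab calculation by auto
  ultimately show ?thesis by simp
qed
lemma plus_k3: "k + 3 < seq_plus s (k+3)"
  using seq_plus_props[OF infs] by auto
lemma minus_k2: "seq_minus s (k+2) = k"
proof (rule seq_minus_eq)
  show "\<And>t. k < t \<Longrightarrow> t < k + 2 \<Longrightarrow> s t \<noteq> s (k+2)" using between1 ab seqs by metis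
qed (use seqs k1 in auto)
lemma minus_k3: "seq_minus s (k+3) = k + 1"
proof (rule seq_minus_eq)
  show "\<And>t. k + 1 < t \<Longrightarrow> t < k + 3 \<Longrightarrow> s t \<noteq> s (k+3)" using between2 ab seqs by metis
qed (use seqs k1 in auto)

lemma plus_alpha: "alpha \<noteq> 0 \<Longrightarrow> seq_plus s alpha = k"
  unfolding alpha_def using seq_plus_minus[OF infs] by simp
lemma plus_beta: "beta \<noteq> 0 \<Longrightarrow> seq_plus s beta = k + 1"
  unfolding beta_def using seq_plus_minus[OF infs] by simp

lemma minus_le: "seq_minus s u < u \<or> seq_minus s u = 0"
  using seq_minus_props[of s u] by auto

abbreviation "Bm \<equiv> exch_matrix C s"

definition colK :: "nat \<Rightarrow> int" where
  "colK u = (if u = 0 then 0 else if u = alpha then 1 else if u = beta then c' else if u = k+1 then - c'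
     else if u = k+2 then -1 else 0)"

definition colK1 :: "nat \<Rightarrow> int" where
  "colK1 u = (if u = 0 then 0 else if u = beta then 1 else if u = k then c else if u = k+2 then - c
     else if u = k+3 then -1 else 0)"

lemma Bk: "Bm u k = colK u"
proof -
  consider "u = 0" | "u \<noteq> 0" "u = alpha" | "u \<noteq> 0" "u = beta" | "u = k+1" | "u = k+2"
    | "u \<noteq> 0" "u \<noteq> alpha" "u \<noteq> beta" "u \<noteq> k+1" "u \<noteq> k+2" by blast
  then show ?thesis
  proof cases
    case 1 then show ?thesis by (simp add: exch_matrix_def colK_def)
  next
    case 2 then show ?thesis using plus_alpha k1 by (simp add: exch_matrix_def colK_def)
  next
    case 3
    then have "seq_minus s u \<noteq> k" using minus_le[of u] beta_props by auto
    then show ?thesis using 3 plus_beta k1 beta_props ab_dist plus_k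
      by (simp add: exch_matrix_def colK_def)
  next
    case 4
    have "seq_minus s (Suc k) = beta" unfolding beta_def by simp
    then show ?thesis using 4 plus_k1 plus_k k1 beta_props ab_dist alpha_props
      by (simp add: exch_matrix_def colK_def)
  next
    case 5
    then show ?thesis using plus_k2 minus_k2 k1 beta_props ab_dist alpha_props
      by (simp add: exch_matrix_def colK_def)
  next
    case 6
    have n1: "k \<noteq> seq_plus s u"
    proof
      assume h: "k = seq_plus s u"
      then have "seq_minus s k = u" using seq_minus_plus[OF infs, of u] 6 by simp
      then show False using 6 alpha_def by simp
    qed
    have n2: "k \<noteq> seq_minus s u"
    proof
      assume h: "k = seq_minus s u"
      then have "seq_plus s k = u" using seq_plus_minus[OF infs, of u] k1 by simp
      then show False using 6 plus_k by simp
    qed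
    have n3: "seq_plus s u \<noteq> k + 1"
    proof
      assume h: "seq_plus s u = k + 1"
      then have "seq_minus s (k+1) = u" using seq_minus_plus[OF infs, of u] 6 by simp
      then show False using 6 beta_def by simp
    qed
    show ?thesis using n1 n2 n3 6 plus_k
      by (auto simp: exch_matrix_def colK_def)
  qed
qed

lemma Bk1: "Bm u (k+1) = colK1 u"
proof -
  consider "u = 0" | "u \<noteq> 0" "u = beta" | "u = k" | "u = k+2" | "u = k+3"
    | "u \<noteq> 0" "u \<noteq> beta" "u \<noteq> k" "u \<noteq> k+2" "u \<noteq> k+3" by blast
  then show ?thesis
  proof cases
    case 1 then show ?thesis by (simp add: exch_matrix_def colK1_def)
  next
    case 2 then show ?thesis using plus_beta k1 by (simp add: exch_matrix_def colK1_def)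
  next
    case 3
    then show ?thesis using plus_k1 plus_k k1 beta_props alpha_props
      by (simp add: exch_matrix_def colK1_def alpha_def[symmetric])
  next
    case 4
    then show ?thesis using plus_k2 plus_k1 minus_k2 k1 beta_props seqs
      by (simp add: exch_matrix_def colK1_def)
  next
    case 5
    then show ?thesis using plus_k3 minus_k3 k1 beta_props
      by (simp add: exch_matrix_def colK1_def)
  next
    case 6
    have n1: "k + 1 \<noteq> seq_plus s u"
    proof
      assume h: "k + 1 = seq_plus s u"
      then have "seq_minus s (k+1) = u" using seq_minus_plus[OF infs, of u] 6 by simp
      then show False using 6 beta_def by simp
    qed
    have n2: "k + 1 \<noteq> seq_minus s u"
    proof
      assume h: "k + 1 = seq_minus s u"
      then have "seq_plus s (k+1) = u" using seq_plus_minus[OF infs, of u] by simp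
      then show False using 6 plus_k1 by simp
    qed
    have n3: "seq_plus s u \<noteq> k + 2"
    proof
      assume h: "seq_plus s u = k + 2"
      then have "seq_minus s (k+2) = u" using seq_minus_plus[OF infs, of u] 6 by simp
      then show False using 6 minus_k2 by simp
    qed
    show ?thesis using n1 n2 n3 6 plus_k1
      by (auto simp: exch_matrix_def colK1_def)
  qed
qed

end



lemma mutate_fst':
  "fst (mutate k X) u v =
    (if u \<noteq> k then (if v \<noteq> k then fst X u v else Sum_any (\<lambda>w. fst X u w * ecol (snd X) k w))
     else Sum_any (\<lambda>w. ecol (snd X) k w * (if v \<noteq> k then fst X w v else Sum_any (\<lambda>x. fst X w x * ecol (snd X) k x))))"
  using mutate_fst[of k "fst X" "snd X"] by simp

lemma mutate_snd':
  "snd (mutate k X) u v =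
    (if v = k then - ebm (snd X) k u k else ebm (snd X) k u v + ebm (snd X) k u k * max (snd X k v) 0)"
  using mutate_snd[of k "fst X" "snd X"] by simp

definition zrow :: "(nat \<Rightarrow> nat \<Rightarrow> rat) \<Rightarrow> bool" where
  "zrow L \<longleftrightarrow> (\<forall>v. L 0 v = 0) \<and> (\<forall>u. L u 0 = 0)"

lemma zrow_mutate: "zrow (fst X) \<Longrightarrow> k \<noteq> 0 \<Longrightarrow> zrow (fst (mutate k X))"
  unfolding zrow_def mutate_fst' by auto

lemma ecol_gen: "ecol B j w = (if w = j then -1 else of_int (max (- B w j) 0))"
  by (simp add: ecol_def mut_E_def)

context fm begin

lemma Bk1_S: "Bm u (Suc k) = colK1 u" using Bk1 by simp


abbreviation "Lam \<equiv> Lambda_matrix C form s"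
abbreviation "Lam' \<equiv> Lambda_matrix C form s'"

definition "LB1 = mutate k (Lam, Bm)"
definition "LB2 = mutate (k+1) LB1"
definition "LB3 = mutate k LB2"

lemma neqs: "beta \<noteq> k" "beta \<noteq> k+1" "beta \<noteq> k+2" "beta \<noteq> k+3"
  "alpha \<noteq> k" "alpha \<noteq> k+1" "alpha \<noteq> k+2" "alpha \<noteq> k+3" "k \<noteq> 0"
  "k \<noteq> beta" "k+1 \<noteq> beta" "k+2 \<noteq> beta" "k+3 \<noteq> beta"
  "k \<noteq> alpha" "k+1 \<noteq> alpha" "k+2 \<noteq> alpha" "k+3 \<noteq> alpha"
  using alpha_props beta_props k1 by auto

lemma neqsS: "Suc k \<noteq> alpha" "Suc k \<noteq> beta" "Suc (Suc k) \<noteq> alpha" "Suc (Suc k) \<noteq> beta"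
  "alpha \<noteq> Suc k" "beta \<noteq> Suc k" "alpha \<noteq> Suc (Suc k)" "beta \<noteq> Suc (Suc k)"
  using neqs by auto

lemma colK_k: "colK k = 0" "colK (k+1) = - c'" using neqs by (auto simp: colK_def)
lemma colK1_k: "colK1 k = c" using neqs by (auto simp: colK1_def)


lemma e1: "ecol Bm k w = (if w = k then -1 else if w = 0 then 0 else if w = beta then - of_int c'
   else if w = k+2 then 1 else 0)"
proof -
  have m: "max (- c') 0 = - c'" using cneg by simp
  consider "w = k" | "w \<noteq> k" "w = 0" | "w \<noteq> k" "w \<noteq> 0" "w = beta" | "w = k+2"
    | "w \<noteq> k" "w \<noteq> 0" "w \<noteq> beta" "w \<noteq> k+2" by blast
  then show ?thesis
  proof cases
    case 1 then show ?thesis by (simp add: ecol_gen)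
  next
    case 2 then show ?thesis by (simp add: ecol_gen Bk colK_def)
  next
    case 3
    then have "colK w = c'" using ab_dist by (simp add: colK_def)
    then show ?thesis using 3 m by (simp add: ecol_gen Bk)
  next
    case 4
    then have "colK w = -1" using neqs by (simp add: colK_def)
    then show ?thesis using 4 neqs by (simp add: ecol_gen Bk)
  next
    case 5
    then have "colK w \<ge> 0" using cneg by (simp add: colK_def)
    then show ?thesis using 5 by (simp add: ecol_gen Bk)
  qed
qed

lemma B1_k1: "snd LB1 u (k+1) = (if u = k then - c else colK1 u + max (- colK u) 0 * c)"
  using cneg colK_k colK1_k unfolding LB1_def
  by (simp add: mutate_snd' ebm_def Bk Bk1 Bk1_S)

lemma B1_k1_S: "snd LB1 u (Suc k) = (if u = k then - c else colK1 u + max (- colK u) 0 * c)"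
  using B1_k1 by simp

lemma B1_k: "snd LB1 u k = (if u = k then 0 else - colK u)"
  using cneg colK_k colK1_k unfolding LB1_def
  by (simp add: mutate_snd' ebm_def Bk Bk1)

lemma m_c: "max (- c') 0 = - c'" "max (- c) 0 = - c" "max c 0 = 0" "max c' 0 = 0"
  using cneg by auto

lemma e2: "ecol (snd LB1) (k+1) w = (if w = k+1 then -1 else if w = 0 then 0 else if w = beta then 1
   else if w = k+3 then 1 else 0)"
proof -
  consider "w = k+1" | "w \<noteq> k+1" "w = 0" | "w \<noteq> 0" "w = beta" | "w = k+3" | "w = k" | "w = k+2"
    | "w \<noteq> k+1" "w \<noteq> 0" "w \<noteq> beta" "w \<noteq> k+3" "w \<noteq> k" "w \<noteq> k+2" by blast
  then show ?thesis
  proof cases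
    case 1 then show ?thesis by (simp add: ecol_gen)
  next
    case 2 then show ?thesis using neqs by (simp add: ecol_gen B1_k1 B1_k1_S colK_def colK1_def)
  next
    case 3
    then have "colK w = c'" "colK1 w = 1" using ab_dist by (simp_all add: colK_def colK1_def)
    then have "snd LB1 w (k+1) = -1" using 3 neqs cc2 m_c by (simp add: B1_k1_S algebra_simps)
    then show ?thesis using 3 neqs by (simp add: ecol_gen)
  next
    case 4
    then have "colK w = 0" "colK1 w = -1" using neqs by (simp_all add: colK_def colK1_def)
    then have "snd LB1 w (k+1) = -1" using 4 by (simp add: B1_k1 B1_k1_S)
    then show ?thesis using 4 neqs by (simp add: ecol_gen)
  next
    case 5
    then have "snd LB1 w (k+1) = - c" by (simp add: B1_k1 B1_k1_S)
    then show ?thesis using 5 neqs m_c by (simp add: ecol_gen)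
  next
    case 6
    then have "colK w = -1" "colK1 w = - c" using neqs by (simp_all add: colK_def colK1_def)
    then have "snd LB1 w (k+1) = 0" using 6 by (simp add: B1_k1 B1_k1_S)
    then show ?thesis using 6 neqs by (simp add: ecol_gen)
  next
    case 7
    then have "colK w \<ge> 0" "colK1 w = 0" using cneg by (simp_all add: colK_def colK1_def)
    then have "snd LB1 w (k+1) = 0" using 7 by (simp add: B1_k1 B1_k1_S)
    then show ?thesis using 7 by (simp add: ecol_gen)
  qed
qed

lemma B2_k: "snd LB2 u k = (if u = k + 1 then - c' else snd LB1 u k + max (- snd LB1 u (k+1)) 0 * c')"
proof -
  have "snd LB1 (k+1) k = c'" using neqs colK_k by (simp add: B1_k)
  then show ?thesis unfolding LB2_def using m_c by (simp add: mutate_snd' ebm_def)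
qed

lemma e3: "ecol (snd LB2) k w = (if w = k then -1 else if w = 0 then 0 else if w = alpha then 1
   else if w = k+3 then - of_int c' else 0)"
proof -
  consider "w = k" | "w \<noteq> k" "w = 0" | "w \<noteq> 0" "w = alpha" | "w = k+3" | "w \<noteq> 0" "w = beta"
    | "w = k+1" | "w = k+2"
    | "w \<noteq> k+1" "w \<noteq> 0" "w \<noteq> beta" "w \<noteq> k+3" "w \<noteq> k" "w \<noteq> k+2" "w \<noteq> alpha" by blast
  then show ?thesis
  proof cases
    case 1 then show ?thesis by (simp add: ecol_gen)
  next
    case 2 then show ?thesis by (simp add: ecol_gen B2_k B1_k B1_k1 B1_k1_S colK_def colK1_def)
  next
    case 3
    then have "colK w = 1" "colK1 w = 0" using ab_dist neqs by (simp_all add: colK_def colK1_def)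
    then have "snd LB2 w k = -1" using 3 neqs by (simp add: B2_k B1_k B1_k1 B1_k1_S)
    then show ?thesis using 3 neqs by (simp add: ecol_gen)
  next
    case 4
    then have "colK w = 0" "colK1 w = -1" using neqs by (simp_all add: colK_def colK1_def)
    then have "snd LB2 w k = c'" using 4 by (simp add: B2_k B1_k B1_k1 B1_k1_S)
    then show ?thesis using 4 neqs m_c by (simp add: ecol_gen)
  next
    case 5
    then have "colK w = c'" "colK1 w = 1" using ab_dist by (simp_all add: colK_def colK1_def)
    then have "snd LB2 w k = 0" using 5 neqs cc2 m_c by (simp add: B2_k B1_k B1_k1 B1_k1_S algebra_simps)
    then show ?thesis using 5 neqs ab_dist by (simp add: ecol_gen)
  next
    case 6
    then have "snd LB2 w k = - c'" by (simp add: B2_k)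
    then show ?thesis using 6 m_c neqsS by (simp add: ecol_gen)
  next
    case 7
    then have "colK w = -1" "colK1 w = - c" using neqs by (simp_all add: colK_def colK1_def)
    then have "snd LB2 w k = 1" using 7 neqs m_c by (simp add: B2_k B1_k B1_k1 B1_k1_S)
    then show ?thesis using 7 neqs by (simp add: ecol_gen)
  next
    case 8
    then have "colK w = 0" "colK1 w = 0" by (simp_all add: colK_def colK1_def)
    then have "snd LB2 w k = 0" using 8 by (simp add: B2_k B1_k B1_k1 B1_k1_S)
    then show ?thesis using 8 by (simp add: ecol_gen)
  qed
qed

end



lemma sum3r:
  fixes f :: "nat \<Rightarrow> rat"
  assumes "x1 \<noteq> 0" "x3 \<noteq> 0" "x1 \<noteq> x3" "x2 \<noteq> x1" "x2 \<noteq> x3" "f 0 = 0"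
  shows "Sum_any (\<lambda>w. f w * (if w = x1 then c1 else if w = 0 then 0 else if w = x2 then c2
      else if w = x3 then c3 else 0)) = c1 * f x1 + c2 * f x2 + c3 * f x3"
proof -
  let ?e = "\<lambda>w. (if w = x1 then c1 else if w = 0 then 0 else if w = x2 then c2
      else if w = x3 then c3 else 0)"
  have "Sum_any (\<lambda>w. f w * ?e w) = sum (\<lambda>w. f w * ?e w) {x1, x2, x3}"
    by (rule Sum_any_sup) auto
  then show ?thesis using assms by (cases "x2 = 0") (auto simp: algebra_simps)
qed

lemma sum3l:
  fixes f :: "nat \<Rightarrow> rat"
  assumes "x1 \<noteq> 0" "x3 \<noteq> 0" "x1 \<noteq> x3" "x2 \<noteq> x1" "x2 \<noteq> x3" "f 0 = 0"
  shows "Sum_any (\<lambda>w. (if w = x1 then c1 else if w = 0 then 0 else if w = x2 then c2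
      else if w = x3 then c3 else 0) * f w) = c1 * f x1 + c2 * f x2 + c3 * f x3"
proof -
  have "Sum_any (\<lambda>w. (if w = x1 then c1 else if w = 0 then 0 else if w = x2 then c2
      else if w = x3 then c3 else 0) * f w) = Sum_any (\<lambda>w. f w * (if w = x1 then c1 else if w = 0 then 0 else if w = x2 then c2
      else if w = x3 then c3 else 0))" by (simp add: mult.commute)
  also have "\<dots> = c1 * f x1 + c2 * f x2 + c3 * f x3" by (rule sum3r[of x1 x3 x2 f, OF assms])
  finally show ?thesis .
qed

context fm begin

lemma zLam: "zrow Lam" by (simp add: zrow_def Lambda_matrix_def)
lemma zL1: "zrow (fst LB1)" unfolding LB1_def using zLam neqs by (intro zrow_mutate) auto
lemma zL2: "zrow (fst LB2)" unfolding LB2_def using zL1 by (intro zrow_mutate) auto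
lemma zL3: "zrow (fst LB3)" unfolding LB3_def using zL2 neqs by (intro zrow_mutate) auto

lemma sE1r: "f 0 = 0 \<Longrightarrow> Sum_any (\<lambda>w. f w * ecol Bm k w) = - f k - of_int c' * f beta + f (k+2)"
  unfolding e1 using neqs by (subst sum3r) auto
lemma sE1l: "f 0 = 0 \<Longrightarrow> Sum_any (\<lambda>w. ecol Bm k w * f w) = - f k - of_int c' * f beta + f (k+2)"
  unfolding e1 using neqs by (subst sum3l) auto
lemma sE2r: "f 0 = 0 \<Longrightarrow> Sum_any (\<lambda>w. f w * ecol (snd LB1) (k+1) w) = - f (k+1) + f beta + f (k+3)"
  unfolding e2 using neqs by (subst sum3r) auto
lemma sE2l: "f 0 = 0 \<Longrightarrow> Sum_any (\<lambda>w. ecol (snd LB1) (k+1) w * f w) = - f (k+1) + f beta + f (k+3)"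
  unfolding e2 using neqs by (subst sum3l) auto
lemma sE3r: "f 0 = 0 \<Longrightarrow> Sum_any (\<lambda>w. f w * ecol (snd LB2) k w) = - f k + f alpha - of_int c' * f (k+3)"
  unfolding e3 using neqs by (subst sum3r) auto
lemma sE3l: "f 0 = 0 \<Longrightarrow> Sum_any (\<lambda>w. ecol (snd LB2) k w * f w) = - f k + f alpha - of_int c' * f (k+3)"
  unfolding e3 using neqs by (subst sum3l) auto

lemma L1a: "u \<noteq> k \<Longrightarrow> v \<noteq> k \<Longrightarrow> fst LB1 u v = Lam u v"
  unfolding LB1_def mutate_fst' by simp
lemma L1b: "v \<noteq> k \<Longrightarrow> fst LB1 k v = - Lam k v - of_int c' * Lam beta v + Lam (k+2) v"
  unfolding LB1_def mutate_fst' using sE1l[of "\<lambda>w. Lam w v"] by (simp add: Lambda_matrix_def)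
lemma L1c: "u \<noteq> k \<Longrightarrow> fst LB1 u k = - Lam u k - of_int c' * Lam u beta + Lam u (k+2)"
  unfolding LB1_def mutate_fst' using sE1r[of "\<lambda>w. Lam u w"] by (simp add: Lambda_matrix_def)

lemma L2a: "u \<noteq> k+1 \<Longrightarrow> v \<noteq> k+1 \<Longrightarrow> fst LB2 u v = fst LB1 u v"
  unfolding LB2_def mutate_fst' by simp
lemma L2b: "v \<noteq> k+1 \<Longrightarrow> fst LB2 (k+1) v = - fst LB1 (k+1) v + fst LB1 beta v + fst LB1 (k+3) v"
  unfolding LB2_def mutate_fst' using sE2l[of "\<lambda>w. fst LB1 w v"] zL1 by (simp add: zrow_def)
lemma L2c: "u \<noteq> k+1 \<Longrightarrow> fst LB2 u (k+1) = - fst LB1 u (k+1) + fst LB1 u beta + fst LB1 u (k+3)"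
  unfolding LB2_def mutate_fst' using sE2r[of "\<lambda>w. fst LB1 u w"] zL1 by (simp add: zrow_def)

lemma L3a: "u \<noteq> k \<Longrightarrow> v \<noteq> k \<Longrightarrow> fst LB3 u v = fst LB2 u v"
  unfolding LB3_def mutate_fst' by simp
lemma L3b: "v \<noteq> k \<Longrightarrow> fst LB3 k v = - fst LB2 k v + fst LB2 alpha v - of_int c' * fst LB2 (k+3) v"
  unfolding LB3_def mutate_fst' using sE3l[of "\<lambda>w. fst LB2 w v"] zL2 by (simp add: zrow_def)
lemma L3c: "u \<noteq> k \<Longrightarrow> fst LB3 u k = - fst LB2 u k + fst LB2 u alpha - of_int c' * fst LB2 u (k+3)"
  unfolding LB3_def mutate_fst' using sE3r[of "\<lambda>w. fst LB2 u w"] zL2 by (simp add: zrow_def)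

end



lemma braid_poly:
  fixes c c' xj X Y P Q :: int
  assumes "c * c' = 2"
  shows "xj - X * P - (Y - X * c') * Q - (X - X * 2 - (Y - X * c') * c) * P -
     (Y - X * c' - (Y - X * c') * 2 - (X - X * 2 - (Y - X * c') * c) * c') * Q =
     xj - Y * Q - (X - Y * c) * P - (Y - Y * 2 - (X - Y * c) * c') * Q -
     (X - Y * c - (X - Y * c) * 2 - (Y - Y * 2 - (X - Y * c) * c') * c) * P"
proof -
  have "(xj - X * P - (Y - X * c') * Q - (X - X * 2 - (Y - X * c') * c) * P -
     (Y - X * c' - (Y - X * c') * 2 - (X - X * 2 - (Y - X * c') * c) * c') * Q) -
     (xj - Y * Q - (X - Y * c) * P - (Y - Y * 2 - (X - Y * c) * c') * Q -
     (X - Y * c - (X - Y * c) * 2 - (Y - Y * 2 - (X - Y * c) * c') * c) * P)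
     = (c * c' - 2) * (X * c' * Q - Y * c * P)" by algebra
  then show ?thesis using assms by simp
qed

context fm begin

abbreviation "wa \<equiv> fund_wt a"
abbreviation "wb \<equiv> fund_wt b"
abbreviation "ra \<equiv> simple_root C a"
abbreviation "rb \<equiv> simple_root C b"
definition "K = k - 1"
abbreviation "p \<equiv> weyl_act C s K"

lemma kS: "k = Suc K" using k1 K_def by simp

lemma braid: "srefl C b (srefl C a (srefl C b (srefl C a x))) = srefl C a (srefl C b (srefl C a (srefl C b x)))"
proof (rule ext)
  fix j
  have A: "C a a = 2" "C b b = 2" using Cdiag by auto
  show "srefl C b (srefl C a (srefl C b (srefl C a x))) j = srefl C a (srefl C b (srefl C a (srefl C b x))) j"
    unfolding srefl_def A by (rule braid_poly[OF cc2])
qed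

lemma Wk: "weyl_act C s k x = p (srefl C a x)"
proof -
  have "weyl_act C s (Suc K) x = p (srefl C (s (Suc K)) x)" by simp
  then show ?thesis using kS by simp
qed
lemma Wk1: "weyl_act C s (k+1) x = p (srefl C a (srefl C b x))"
proof -
  have "weyl_act C s (Suc (Suc K)) x = p (srefl C (s (Suc K)) (srefl C (s (Suc (Suc K))) x))" by simp
  then show ?thesis using kS by simp
qed
lemma Wk2: "weyl_act C s (k+2) x = p (srefl C a (srefl C b (srefl C a x)))"
proof -
  have "weyl_act C s (Suc (Suc (Suc K))) x = p (srefl C (s (Suc K)) (srefl C (s (Suc (Suc K))) (srefl C (s (Suc (Suc (Suc K)))) x)))" by simp
  moreover have "s (Suc (Suc (Suc K))) = a" using seqs kS by simp
  ultimately show ?thesis using kS by (simp add: numeral_2_eq_2)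
qed
lemma Wk3: "weyl_act C s (k+3) x = p (srefl C a (srefl C b (srefl C a (srefl C b x))))"
proof -
  have "weyl_act C s (Suc (Suc (Suc (Suc K)))) x = p (srefl C (s (Suc K)) (srefl C (s (Suc (Suc K))) (srefl C (s (Suc (Suc (Suc K)))) (srefl C (s (Suc (Suc (Suc (Suc K))))) x))))" by simp
  moreover have "s (Suc (Suc (Suc K))) = a" "s (Suc (Suc (Suc (Suc K)))) = b" using seqs kS by (simp_all add: numeral_3_eq_3)
  ultimately show ?thesis using kS by (simp add: numeral_3_eq_3)
qed

lemma W'lt: "u \<le> K \<Longrightarrow> weyl_act C s' u = weyl_act C s u"
  by (rule weyl_cong) (use seq_out kS in auto)

lemma W'k: "weyl_act C s' k x = p (srefl C b x)"
proof -
  have "weyl_act C s' (Suc K) x = weyl_act C s' K (srefl C (s' (Suc K)) x)" by simp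
  then show ?thesis using kS seqs W'lt[of K] by simp
qed
lemma W'k1: "weyl_act C s' (k+1) x = p (srefl C b (srefl C a x))"
proof -
  have "weyl_act C s' (Suc (Suc K)) x = weyl_act C s' K (srefl C (s' (Suc K)) (srefl C (s' (Suc (Suc K))) x))" by simp
  moreover have "s' (Suc K) = b" "s' (Suc (Suc K)) = a" using seqs kS by auto
  ultimately show ?thesis using kS W'lt[of K] by simp
qed
lemma W'k2: "weyl_act C s' (k+2) x = p (srefl C b (srefl C a (srefl C b x)))"
proof -
  have "weyl_act C s' (Suc (Suc (Suc K))) x = weyl_act C s' K (srefl C (s' (Suc K)) (srefl C (s' (Suc (Suc K))) (srefl C (s' (Suc (Suc (Suc K)))) x)))" by simp
  moreover have "s' (Suc K) = b" "s' (Suc (Suc K)) = a" "s' (Suc (Suc (Suc K))) = b" using seqs kS by (auto simp: numeral_2_eq_2)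
  ultimately show ?thesis using kS W'lt[of K] by (simp add: numeral_2_eq_2)
qed
lemma W'k3: "weyl_act C s' (k+3) x = p (srefl C b (srefl C a (srefl C b (srefl C a x))))"
proof -
  have "weyl_act C s' (Suc (Suc (Suc (Suc K)))) x = weyl_act C s' K (srefl C (s' (Suc K)) (srefl C (s' (Suc (Suc K))) (srefl C (s' (Suc (Suc (Suc K)))) (srefl C (s' (Suc (Suc (Suc (Suc K))))) x))))" by simp
  moreover have "s' (Suc K) = b" "s' (Suc (Suc K)) = a" "s' (Suc (Suc (Suc K))) = b" "s' (Suc (Suc (Suc (Suc K)))) = a"
    using seqs kS by (auto simp: numeral_2_eq_2 numeral_3_eq_3)
  ultimately show ?thesis using kS W'lt[of K] by (simp add: numeral_3_eq_3)
qed

lemma W'ge: "k + 3 \<le> u \<Longrightarrow> weyl_act C s' u = weyl_act C s u"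
proof (induction u)
  case 0 then show ?case by simp
next
  case (Suc u)
  show ?case
  proof (cases "Suc u = k + 3")
    case True
    show ?thesis unfolding True by (simp add: fun_eq_iff W'k3 Wk3 braid[simplified])
  next
    case False
    then have "k + 3 \<le> u" using Suc by simp
    moreover have "s' (Suc u) = s (Suc u)" using False Suc seq_out by simp
    ultimately show ?thesis using Suc by (simp add: fun_eq_iff)
  qed
qed

end



definition Pv :: "('i \<Rightarrow> 'i \<Rightarrow> int) \<Rightarrow> (nat \<Rightarrow> 'i) \<Rightarrow> nat \<Rightarrow> ('i \<Rightarrow> int)" where
  "Pv C t u = fund_wt (t u) - weyl_act C t u (fund_wt (t u))"
definition Qv :: "('i \<Rightarrow> 'i \<Rightarrow> int) \<Rightarrow> (nat \<Rightarrow> 'i) \<Rightarrow> nat \<Rightarrow> ('i \<Rightarrow> int)" where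
  "Qv C t u = fund_wt (t u) + weyl_act C t u (fund_wt (t u))"

lemma Lam_def': "Lambda_matrix C form t u v = (if u = 0 \<or> v = 0 then 0 else if u \<le> v then form (Pv C t u) (Qv C t v)
   else - form (Pv C t v) (Qv C t u))"
  unfolding Lambda_matrix_def Pv_def Qv_def by simp

lemma Lam_skew:
  assumes "invariant_form C d form"
  shows "Lambda_matrix C form t u v = - Lambda_matrix C form t v u"
proof -
  have "form (Pv C t u) (Qv C t u) = 0"
    using swap_lemma[OF assms, of "fund_wt (t u)" t u "fund_wt (t u)"] unfolding Pv_def Qv_def by simp
  then show ?thesis unfolding Lam_def' by auto
qed

context fm begin

lemmas FL = form_lin[OF IF]
lemmas EXP = weyl_lin srefl_lin srefl_fund srefl_root sc_simps FL form_weyl[OF IF]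

lemma form_wfund: "form (weyl_act C s n x) (fund_wt i) = form (fund_wt i) (weyl_act C s n x)"
  using form_sym[OF IF] by metis
lemma form_rootfund: "form (simple_root C i) (fund_wt j) = (if i = j then of_int (d i) else 0)"
  using form_fund_root[OF IF Cdiag, of j i] form_sym[OF IF] by metis
lemma form_fundroot: "form (fund_wt j) (simple_root C i) = (if j = i then of_int (d j) else 0)"
  using form_fund_root[OF IF Cdiag, of j i] by simp

lemmas BAS = form_wfund form_rootfund form_fundroot form_roots[OF IF]

lemma Lskew: "Lam u v = - Lam v u" using Lam_skew[OF IF] by blast
lemma L'skew: "Lam' u v = - Lam' v u" using Lam_skew[OF IF] by blast

lemma LamM1:
  assumes "m \<le> K" "\<And>t. m < t \<Longrightarrow> t \<le> K \<Longrightarrow> s t \<noteq> e" "m \<noteq> 0 \<Longrightarrow> s m = e" "K < v"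
  shows "Lam m v = form (fund_wt e - p (fund_wt e)) (Qv C s v)"
proof -
  have W: "p (fund_wt e) = weyl_act C s m (fund_wt e)" using assms by (intro weyl_fix) auto
  show ?thesis
  proof (cases "m = 0")
    case True then show ?thesis using W by (simp add: Lam_def' FL)
  next
    case False then show ?thesis using W assms by (simp add: Lam_def' Pv_def)
  qed
qed

lemma LamM2:
  assumes "m \<le> K" "\<And>t. m < t \<Longrightarrow> t \<le> K \<Longrightarrow> s t \<noteq> e" "m \<noteq> 0 \<Longrightarrow> s m = e" "1 \<le> v" "v \<le> K"
  shows "Lam m v = - form (Pv C s v) (fund_wt e + p (fund_wt e))"
proof -
  have W: "p (fund_wt e) = weyl_act C s m (fund_wt e)" using assms by (intro weyl_fix) auto
  have sw: "form (fund_wt e - weyl_act C s v (fund_wt e)) (Qv C s v) = - form (Pv C s v) (fund_wt e + weyl_act C s v (fund_wt e))"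
    unfolding Pv_def Qv_def by (rule swap_lemma[OF IF])
  show ?thesis
  proof (cases "m \<le> v")
    case True
    have W2: "p (fund_wt e) = weyl_act C s v (fund_wt e)" using assms True by (intro weyl_fix) auto
    show ?thesis
    proof (cases "m = 0")
      case True
      then have "weyl_act C s v (fund_wt e) = fund_wt e" using W W2 by simp
      then show ?thesis using sw True W2 assms by (simp add: Lam_def' FL)
    next
      case False
      then show ?thesis using sw True W W2 assms by (simp add: Lam_def' Pv_def)
    qed
  next
    case False
    then show ?thesis using W assms by (simp add: Lam_def' Qv_def)
  qed
qed

lemma alphaM: "alpha \<le> K" "\<And>t. alpha < t \<Longrightarrow> t \<le> K \<Longrightarrow> s t \<noteq> a" "alpha \<noteq> 0 \<Longrightarrow> s alpha = a"
  using alpha_props kS by auto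
lemma betaM: "beta \<le> K" "\<And>t. beta < t \<Longrightarrow> t \<le> K \<Longrightarrow> s t \<noteq> b" "beta \<noteq> 0 \<Longrightarrow> s beta = b"
  using beta_props kS by auto

lemma pa_alpha: "p wa = weyl_act C s alpha wa" using alphaM by (intro weyl_fix) auto
lemma pb_beta: "p wb = weyl_act C s beta wb" using betaM by (intro weyl_fix) auto

lemma Lam_ab: "Lam alpha beta = - form (wb - p wb) (wa + p wa)"
proof (cases "beta = 0")
  case True
  then have "p wb = wb" using pb_beta by simp
  then show ?thesis using True by (simp add: Lam_def' FL)
next
  case False
  then have "Lam alpha beta = - form (Pv C s beta) (wa + p wa)"
    using LamM2[OF alphaM, of beta] betaM by auto
  then show ?thesis using pb_beta betaM False by (simp add: Pv_def)
qed

lemma Lam_ba: "Lam beta alpha = - form (wa - p wa) (wb + p wb)"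
proof (cases "alpha = 0")
  case True
  then have "p wa = wa" using pa_alpha by simp
  then show ?thesis using True by (simp add: Lam_def' FL)
next
  case False
  then have "Lam beta alpha = - form (Pv C s alpha) (wb + p wb)"
    using LamM2[OF betaM, of alpha] alphaM by auto
  then show ?thesis using pa_alpha alphaM False by (simp add: Pv_def)
qed

lemma Pvals:
  "Pv C s k = wa - p (srefl C a wa)" "Qv C s k = wa + p (srefl C a wa)"
  "Pv C s (k+1) = wb - p (srefl C a (srefl C b wb))" "Qv C s (k+1) = wb + p (srefl C a (srefl C b wb))"
  "Pv C s (k+2) = wa - p (srefl C a (srefl C b (srefl C a wa)))" "Qv C s (k+2) = wa + p (srefl C a (srefl C b (srefl C a wa)))"
  "Pv C s (k+3) = wb - p (srefl C a (srefl C b (srefl C a (srefl C b wb))))"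
  "Qv C s (k+3) = wb + p (srefl C a (srefl C b (srefl C a (srefl C b wb))))"
  "Pv C s' k = wb - p (srefl C b wb)" "Qv C s' k = wb + p (srefl C b wb)"
  "Pv C s' (k+1) = wa - p (srefl C b (srefl C a wa))" "Qv C s' (k+1) = wa + p (srefl C b (srefl C a wa))"
  "Pv C s' (k+2) = wb - p (srefl C b (srefl C a (srefl C b wb)))" "Qv C s' (k+2) = wb + p (srefl C b (srefl C a (srefl C b wb)))"
  "Pv C s' (k+3) = wa - p (srefl C b (srefl C a (srefl C b (srefl C a wa))))"
  "Qv C s' (k+3) = wa + p (srefl C b (srefl C a (srefl C b (srefl C a wa))))"
  unfolding Pv_def Qv_def using seqs by (simp_all only: Wk Wk1 Wk2 Wk3 W'k W'k1 W'k2 W'k3)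

lemma PQout: "1 \<le> u \<Longrightarrow> u < k \<or> k + 3 < u \<Longrightarrow> Pv C s' u = Pv C s u \<and> Qv C s' u = Qv C s u"
proof -
  assume u: "1 \<le> u" "u < k \<or> k + 3 < u"
  then have "weyl_act C s' u = weyl_act C s u" using W'lt W'ge kS by auto
  then show ?thesis using seq_out[OF u] unfolding Pv_def Qv_def by simp
qed

lemma ccr: "of_int c * of_int c' = (2::rat)" "of_int c' * of_int c = (2::rat)"
  using cc cc2 by (metis of_int_mult of_int_numeral)+

lemma cnz: "rat_of_int (C (s (Suc k)) a) \<noteq> 0" using cneg by simp
lemma cnz0: "C (s (Suc k)) a \<noteq> 0" using cneg by simp
lemma cdiv: "rat_of_int (C a (s (Suc k))) = 2 / rat_of_int (C (s (Suc k)) a)"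
  using ccr cnz by (simp add: field_simps)

lemma num_sc: "(numeral n :: 'i \<Rightarrow> int) * x = sc (numeral n) x"
  by (simp add: sc_def fun_eq_iff)

lemma LamLE: "1 \<le> u \<Longrightarrow> u \<le> v \<Longrightarrow> Lambda_matrix C form t u v = form (Pv C t u) (Qv C t v)"
  by (simp add: Lam_def')
lemma LamGT: "1 \<le> v \<Longrightarrow> v < u \<Longrightarrow> Lambda_matrix C form t u v = - form (Pv C t v) (Qv C t u)"
  by (simp add: Lam_def')

lemma RowK_hi: "k + 3 < v \<Longrightarrow> Lam' k v = - Lam (k+1) v + Lam beta v + Lam (k+3) v"
proof -
  assume v: "k + 3 < v"
  have Q: "Qv C s' v = Qv C s v" using PQout[of v] v by auto
  have B: "Lam beta v = form (wb - p wb) (Qv C s v)" using LamM1[OF betaM] v kS by auto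
  have E: "Lam' k v = form (Pv C s' k) (Qv C s v)" "Lam (k+1) v = form (Pv C s (k+1)) (Qv C s v)"
    "Lam (k+3) v = form (Pv C s (k+3)) (Qv C s v)"
    using v k1 Q by (simp_all add: LamLE)
  show ?thesis using ab Cdiag[of a] Cdiag[of b] unfolding E B Pvals
    by (simp add: EXP num_sc cdiv cnz cnz0; simp add: field_simps cnz0)
qed


lemma RowK_lo: "1 \<le> v \<Longrightarrow> v \<le> K \<Longrightarrow> Lam' k v = - Lam (k+1) v + Lam beta v + Lam (k+3) v"
proof -
  assume v: "1 \<le> v" "v \<le> K"
  have P: "Pv C s' v = Pv C s v" using PQout[of v] v kS by auto
  have B: "Lam beta v = - form (Pv C s v) (wb + p wb)" using LamM2[OF betaM] v by auto
  have E: "Lam' k v = - form (Pv C s v) (Qv C s' k)" "Lam (k+1) v = - form (Pv C s v) (Qv C s (k+1))"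
    "Lam (k+3) v = - form (Pv C s v) (Qv C s (k+3))"
    using v kS P by (simp_all add: LamGT)
  show ?thesis using ab Cdiag[of a] Cdiag[of b] unfolding E B Pvals
    by (simp add: EXP num_sc cdiv cnz cnz0; simp add: field_simps cnz0)
qed

lemma RowK1_hi: "k + 3 < v \<Longrightarrow> Lam' (k+1) v = Lam k v + of_int c' * Lam beta v - Lam (k+2) v + Lam alpha v
   - of_int c' * Lam (k+3) v"
proof -
  assume v: "k + 3 < v"
  have Q: "Qv C s' v = Qv C s v" using PQout[of v] v by auto
  have B: "Lam beta v = form (wb - p wb) (Qv C s v)" using LamM1[OF betaM] v kS by auto
  have A: "Lam alpha v = form (wa - p wa) (Qv C s v)" using LamM1[OF alphaM] v kS by auto
  have E: "Lam' (k+1) v = form (Pv C s' (k+1)) (Qv C s v)" "Lam k v = form (Pv C s k) (Qv C s v)"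
    "Lam (k+2) v = form (Pv C s (k+2)) (Qv C s v)" "Lam (k+3) v = form (Pv C s (k+3)) (Qv C s v)"
    using v k1 Q by (simp_all add: LamLE)
  show ?thesis using ab Cdiag[of a] Cdiag[of b] unfolding E B A Pvals
    by (simp add: EXP num_sc cdiv cnz cnz0; simp add: field_simps cnz0)
qed

lemma RowK1_lo: "1 \<le> v \<Longrightarrow> v \<le> K \<Longrightarrow> Lam' (k+1) v = Lam k v + of_int c' * Lam beta v - Lam (k+2) v + Lam alpha v
   - of_int c' * Lam (k+3) v"
proof -
  assume v: "1 \<le> v" "v \<le> K"
  have P: "Pv C s' v = Pv C s v" using PQout[of v] v kS by auto
  have B: "Lam beta v = - form (Pv C s v) (wb + p wb)" using LamM2[OF betaM] v by auto
  have A: "Lam alpha v = - form (Pv C s v) (wa + p wa)" using LamM2[OF alphaM] v by auto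
  have E: "Lam' (k+1) v = - form (Pv C s v) (Qv C s' (k+1))" "Lam k v = - form (Pv C s v) (Qv C s k)"
    "Lam (k+2) v = - form (Pv C s v) (Qv C s (k+2))" "Lam (k+3) v = - form (Pv C s v) (Qv C s (k+3))"
    using v kS P by (simp_all add: LamGT)
  show ?thesis using ab Cdiag[of a] Cdiag[of b] unfolding E B A Pvals
    by (simp add: EXP num_sc cdiv cnz cnz0; simp add: field_simps cnz0)
qed

lemma RowK2: "v \<notin> {k, k+1, k+2, k+3} \<Longrightarrow> Lam' (k+2) v = Lam (k+3) v"
proof -
  assume v: "v \<notin> {k, k+1, k+2, k+3}"
  have V: "Pv C s' (k+2) = Pv C s (k+3)" "Qv C s' (k+2) = Qv C s (k+3)"
    using ab unfolding Pvals braid[symmetric] by (simp_all add: srefl_fund)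
  consider "v = 0" | "1 \<le> v" "v \<le> K" | "k + 3 < v" using v kS by force
  then show ?thesis
  proof cases
    case 1 then show ?thesis by (simp add: Lam_def')
  next
    case 2
    have P: "Pv C s' v = Pv C s v" using PQout[of v] 2 kS by auto
    show ?thesis using 2 kS by (simp add: LamGT P V V[simplified])
  next
    case 3
    have Q: "Qv C s' v = Qv C s v" using PQout[of v] 3 by auto
    show ?thesis using 3 by (simp add: LamLE Q V V[simplified])
  qed
qed

lemma RowK3: "v \<notin> {k, k+1, k+2, k+3} \<Longrightarrow> Lam' (k+3) v = Lam (k+2) v"
proof -
  assume v: "v \<notin> {k, k+1, k+2, k+3}"
  have V: "Pv C s' (k+3) = Pv C s (k+2)" "Qv C s' (k+3) = Qv C s (k+2)"
    using ab unfolding Pvals braid by (simp_all add: srefl_fund)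
  consider "v = 0" | "1 \<le> v" "v \<le> K" | "k + 3 < v" using v kS by force
  then show ?thesis
  proof cases
    case 1 then show ?thesis by (simp add: Lam_def')
  next
    case 2
    have P: "Pv C s' v = Pv C s v" using PQout[of v] 2 kS by auto
    show ?thesis using 2 kS by (simp add: LamGT P V V[simplified])
  next
    case 3
    have Q: "Qv C s' v = Qv C s v" using PQout[of v] 3 by auto
    show ?thesis using 3 by (simp add: LamLE Q V V[simplified])
  qed
qed

end



context fm begin

lemma Lzero: "Lam u 0 = 0" "Lam 0 v = 0" "Lam' u 0 = 0" "Lam' 0 v = 0"
  by (simp_all add: Lam_def')

lemma RowK: "v \<notin> {k, k+1, k+2, k+3} \<Longrightarrow> Lam' k v = - Lam (k+1) v + Lam beta v + Lam (k+3) v"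
proof -
  assume v: "v \<notin> {k, k+1, k+2, k+3}"
  consider "v = 0" | "1 \<le> v" "v \<le> K" | "k + 3 < v" using v kS by force
  then show ?thesis
    by cases (simp_all add: Lzero RowK_lo RowK_lo[simplified] RowK_hi RowK_hi[simplified])
qed

lemma RowK1: "v \<notin> {k, k+1, k+2, k+3} \<Longrightarrow> Lam' (k+1) v = Lam k v + of_int c' * Lam beta v - Lam (k+2) v + Lam alpha v
   - of_int c' * Lam (k+3) v"
proof -
  assume v: "v \<notin> {k, k+1, k+2, k+3}"
  consider "v = 0" | "1 \<le> v" "v \<le> K" | "k + 3 < v" using v kS by force
  then show ?thesis
    by cases (simp_all add: Lzero RowK1_lo RowK1_lo[simplified] RowK1_hi RowK1_hi[simplified])
qed

lemma L3row_k1: "v \<noteq> k \<Longrightarrow> v \<noteq> k+1 \<Longrightarrow> fst LB3 (k+1) v = - Lam (k+1) v + Lam beta v + Lam (k+3) v"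
  using neqs by (simp add: L3a L3a[simplified] L2b L2b[simplified] L1a L1a[simplified])

lemma L3row_k: "v \<noteq> k \<Longrightarrow> v \<noteq> k+1 \<Longrightarrow>
    fst LB3 k v = Lam k v + of_int c' * Lam beta v - Lam (k+2) v + Lam alpha v - of_int c' * Lam (k+3) v"
  using neqs by (simp add: L3b L3b[simplified] L2a L2a[simplified] L1a L1a[simplified] L1b L1b[simplified])

lemma L3row_k2: "v \<noteq> k \<Longrightarrow> v \<noteq> k+1 \<Longrightarrow> fst LB3 (k+2) v = Lam (k+2) v"
  using neqs by (simp add: L3a L3a[simplified] L2a L2a[simplified] L1a L1a[simplified])

lemma L3row_k3: "v \<noteq> k \<Longrightarrow> v \<noteq> k+1 \<Longrightarrow> fst LB3 (k+3) v = Lam (k+3) v"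
  using neqs by (simp add: L3a L3a[simplified] L2a L2a[simplified] L1a L1a[simplified])

lemma L3out: "u \<noteq> k \<Longrightarrow> u \<noteq> k+1 \<Longrightarrow> v \<noteq> k \<Longrightarrow> v \<noteq> k+1 \<Longrightarrow> fst LB3 u v = Lam u v"
  by (simp add: L3a L3a[simplified] L2a L2a[simplified] L1a L1a[simplified])

lemma L3_k1k: "fst LB3 (k+1) k = - (- (- Lam (k+1) k - of_int c' * Lam (k+1) beta + Lam (k+1) (k+2))
     + (- Lam beta k - of_int c' * Lam beta beta + Lam beta (k+2))
     + (- Lam (k+3) k - of_int c' * Lam (k+3) beta + Lam (k+3) (k+2)))
   + (- Lam (k+1) alpha + Lam beta alpha + Lam (k+3) alpha)
   - of_int c' * (- Lam (k+1) (k+3) + Lam beta (k+3) + Lam (k+3) (k+3))"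
  using neqs by (simp add: L3c L3c[simplified] L2b L2b[simplified] L1a L1a[simplified] L1c L1c[simplified])

lemma LamOut: "u \<notin> {k, k+1, k+2, k+3} \<Longrightarrow> v \<notin> {k, k+1, k+2, k+3} \<Longrightarrow> Lam' u v = Lam u v"
proof -
  assume u: "u \<notin> {k, k+1, k+2, k+3}" and v: "v \<notin> {k, k+1, k+2, k+3}"
  show ?thesis
  proof (cases "u = 0 \<or> v = 0")
    case True then show ?thesis by (auto simp: Lzero)
  next
    case False
    then have "1 \<le> u" "1 \<le> v" by auto
    then have "Pv C s' u = Pv C s u \<and> Qv C s' u = Qv C s u" "Pv C s' v = Pv C s v \<and> Qv C s' v = Qv C s v"
      using PQout u v by force+
    then show ?thesis by (simp add: Lam_def')
  qed
qed


lemma LVab: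
  "\<And>w. K < w \<Longrightarrow> Lam beta w = form (wb - p wb) (Qv C s w)"
  "\<And>w. K < w \<Longrightarrow> Lam w beta = - form (wb - p wb) (Qv C s w)"
  "\<And>w. K < w \<Longrightarrow> Lam alpha w = form (wa - p wa) (Qv C s w)"
  "\<And>w. K < w \<Longrightarrow> Lam w alpha = - form (wa - p wa) (Qv C s w)"
  using LamM1[OF betaM] LamM1[OF alphaM] Lskew by metis+

lemma Ldiag: "Lam u u = 0" "Lam' u u = 0" using Lskew[of u u] L'skew[of u u] by simp_all

lemma fab: "form wb wa = form wa wb" using form_sym[OF IF] by metis
lemma dab: "d b * c' = d a * c" using dsym by metis

lemma ddiv: "rat_of_int (d (s (Suc k))) = rat_of_int (d a) * rat_of_int (C a (s (Suc k))) / rat_of_int (C (s (Suc k)) a)"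
proof -
  have "rat_of_int (d (s (Suc k))) * rat_of_int (C (s (Suc k)) a) = rat_of_int (d a) * rat_of_int (C a (s (Suc k)))"
    using dsym[of "s (Suc k)" a] by (metis of_int_mult)
  then show ?thesis using cnz by (simp add: field_simps)
qed

lemmas FIN = EXP num_sc BAS fab dab ddiv ab ab[symmetric] ab[simplified] ab[simplified, symmetric] Cdiag cdiv cnz cnz0

lemma Id2: "Lam' k (k+2) = - Lam (k+1) (k+3) + Lam beta (k+3) + Lam (k+3) (k+3)"
proof -
  have E: "Lam' k (k+2) = form (Pv C s' k) (Qv C s' (k+2))" "Lam (k+1) (k+3) = form (Pv C s (k+1)) (Qv C s (k+3))"
    using k1 by (simp_all add: LamLE)
  have B: "Lam beta (k+3) = form (wb - p wb) (Qv C s (k+3))" using LVab kS by simp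
  show ?thesis unfolding E B Ldiag Pvals by (simp add: FIN; simp add: field_simps cnz0)
qed


lemma Klt: "K < k" "K < k + 1" "K < k + 2" "K < k + 3" "K < Suc k" "K < Suc (Suc k)" using kS by simp_all

lemmas LVALS = LamLE LamGT LVab LVab[simplified] Lam_ab Lam_ba Klt Pvals Pvals[simplified]

lemma Id1: "Lam' k (k+1) = - (- (- Lam (k+1) k - of_int c' * Lam (k+1) beta + Lam (k+1) (k+2))
     + (- Lam beta k - of_int c' * Lam beta beta + Lam beta (k+2))
     + (- Lam (k+3) k - of_int c' * Lam (k+3) beta + Lam (k+3) (k+2)))
   + (- Lam (k+1) alpha + Lam beta alpha + Lam (k+3) alpha)
   - of_int c' * (- Lam (k+1) (k+3) + Lam beta (k+3) + Lam (k+3) (k+3))"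
  unfolding Ldiag using k1 by (simp add: LVALS FIN; simp add: field_simps cnz0)


lemma Id3: "Lam' k (k+3) = - Lam (k+1) (k+2) + Lam beta (k+2) + Lam (k+3) (k+2)"
  unfolding Ldiag using k1 by (simp add: LVALS FIN; simp add: field_simps cnz0)

lemma Id4: "Lam' (k+1) (k+2) = Lam k (k+3) + of_int c' * Lam beta (k+3) - Lam (k+2) (k+3) + Lam alpha (k+3)
   - of_int c' * Lam (k+3) (k+3)"
  unfolding Ldiag using k1 by (simp add: LVALS FIN; simp add: field_simps cnz0)

lemma Id5: "Lam' (k+1) (k+3) = Lam k (k+2) + of_int c' * Lam beta (k+2) - Lam (k+2) (k+2) + Lam alpha (k+2)
   - of_int c' * Lam (k+3) (k+2)"
  unfolding Ldiag using k1 by (simp add: LVALS FIN; simp add: field_simps cnz0)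

lemma Id6: "Lam' (k+2) (k+3) = Lam (k+3) (k+2)"
  unfolding Ldiag using k1 by (simp add: LVALS FIN; simp add: field_simps cnz0)

end



context fm begin

lemma skL: "skew Lam" unfolding skew_def using Lskew by blast

lemma fin1: "finite {w. ecol Bm k w \<noteq> 0}"
  by (rule finite_subset[of _ "{k, beta, k+2}"]) (auto simp: e1 split: if_splits)
lemma fin2: "finite {w. ecol (snd LB1) (k+1) w \<noteq> 0}"
  by (rule finite_subset[of _ "{k+1, beta, k+3}"]) (auto simp: e2 e2[simplified] split: if_splits)
lemma fin3: "finite {w. ecol (snd LB2) k w \<noteq> 0}"
  by (rule finite_subset[of _ "{k, alpha, k+3}"]) (auto simp: e3 split: if_splits)

lemma sk1: "skew (fst LB1)" unfolding LB1_def by (rule skew_mutate[OF skL fin1])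
lemma sk2: "skew (fst LB2)"
proof -
  have "LB2 = mutate (k+1) (fst LB1, snd LB1)" unfolding LB2_def by simp
  then show ?thesis using skew_mutate[OF sk1 fin2] by simp
qed
lemma sk3: "skew (fst LB3)"
proof -
  have "LB3 = mutate k (fst LB2, snd LB2)" unfolding LB3_def by simp
  then show ?thesis using skew_mutate[OF sk2 fin3] by simp
qed

lemma L3skew: "fst LB3 u v = - fst LB3 v u" using sk3 unfolding skew_def by blast

definition tau :: "nat \<Rightarrow> nat" where "tau u = sigma k (sigma (k+2) u)"

lemma tau_vals: "tau k = k+1" "tau (k+1) = k" "tau (k+2) = k+3" "tau (k+3) = k+2"
  "u \<notin> {k, k+1, k+2, k+3} \<Longrightarrow> tau u = u"
  by (auto simp: tau_def sigma_def transpose_def)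

lemma rhs_eq: "fst ((perm_pair (sigma (k+2)) \<circ> perm_pair (sigma k) \<circ> mutate k \<circ> mutate (k+1) \<circ> mutate k)
                (Lam, Bm)) u v = fst LB3 (tau u) (tau v)"
  by (simp add: LB3_def LB2_def LB1_def perm_pair_def perm_mat_def sigma_def tau_def)

abbreviation "G u v \<equiv> Lam' u v = fst LB3 (tau u) (tau v)"

lemma Gsym: "G v u \<Longrightarrow> G u v"
  using L'skew[of u v] L3skew[of "tau u" "tau v"] by simp

lemma Gout: "u \<notin> {k, k+1, k+2, k+3} \<Longrightarrow> v \<notin> {k, k+1, k+2, k+3} \<Longrightarrow> G u v"
  using tau_vals(5)[of u] tau_vals(5)[of v] LamOut L3out by auto

lemma Grow: "u \<in> {k, k+1, k+2, k+3} \<Longrightarrow> v \<notin> {k, k+1, k+2, k+3} \<Longrightarrow> G u v"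
proof -
  assume u: "u \<in> {k, k+1, k+2, k+3}" and v: "v \<notin> {k, k+1, k+2, k+3}"
  have tv: "tau v = v" using tau_vals(5) v by blast
  have vv: "v \<noteq> k" "v \<noteq> k+1" using v by auto
  show ?thesis using u
  proof (elim insertE emptyE)
    assume "u = k" then show ?thesis using RowK[OF v] L3row_k1[OF vv] tv tau_vals by simp
  next
    assume "u = k+1" then show ?thesis using RowK1[OF v] L3row_k[OF vv] tv tau_vals by simp
  next
    assume "u = k+2" then show ?thesis using RowK2[OF v] L3row_k3[OF vv] tv tau_vals by simp
  next
    assume "u = k+3" then show ?thesis using RowK3[OF v] L3row_k2[OF vv] tv tau_vals by simp
  qed
qed

lemma L3diag: "fst LB3 u u = 0" using L3skew[of u u] by simp

lemma Gblock_up: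
  "G k k" "G k (k+1)" "G k (k+2)" "G k (k+3)" "G (k+1) (k+1)" "G (k+1) (k+2)" "G (k+1) (k+3)"
  "G (k+2) (k+2)" "G (k+2) (k+3)" "G (k+3) (k+3)"
proof -
  have n: "k+3 \<noteq> k" "k+3 \<noteq> k+1" "k+2 \<noteq> k" "k+2 \<noteq> k+1" by auto
  show "G k k" "G (k+1) (k+1)" "G (k+2) (k+2)" "G (k+3) (k+3)" using tau_vals Ldiag L3diag by simp_all
  show "G k (k+1)" using tau_vals Id1 L3_k1k by simp
  show "G k (k+2)" using tau_vals Id2 L3row_k1[OF n(1,2)] by simp
  show "G k (k+3)" using tau_vals Id3 L3row_k1[OF n(3,4)] by simp
  show "G (k+1) (k+2)" using tau_vals Id4 L3row_k[OF n(1,2)] by simp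
  show "G (k+1) (k+3)" using tau_vals Id5 L3row_k[OF n(3,4)] by simp
  show "G (k+2) (k+3)" using tau_vals Id6 L3row_k3[OF n(3,4)] by simp
qed

theorem main: "Lam' = fst ((perm_pair (sigma (k+2)) \<circ> perm_pair (sigma k) \<circ> mutate k \<circ> mutate (k+1) \<circ> mutate k)
                (Lam, Bm))"
proof (intro ext)
  fix u v
  have "G u v"
  proof (cases "u \<in> {k, k+1, k+2, k+3}")
    case True
    show ?thesis
    proof (cases "v \<in> {k, k+1, k+2, k+3}")
      case True
      with \<open>u \<in> _\<close> show ?thesis using Gblock_up Gsym by auto
    next
      case False then show ?thesis using Grow True by blast
    qed
  next
    case False
    show ?thesis
    proof (cases "v \<in> {k, k+1, k+2, k+3}")
      case True then show ?thesis using Grow False Gsym by blast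
    next
      case F2: False then show ?thesis using Gout False by blast
    qed
  qed
  then show "Lam' u v = fst ((perm_pair (sigma (k+2)) \<circ> perm_pair (sigma k) \<circ> mutate k \<circ> mutate (k+1) \<circ> mutate k)
                (Lam, Bm)) u v" using rhs_eq by simp
qed

end


theorem lemma3p5:
  fixes C :: "'i::finite \<Rightarrow> 'i \<Rightarrow> int" and d :: "'i \<Rightarrow> int"
    and form :: "('i \<Rightarrow> int) \<Rightarrow> ('i \<Rightarrow> int) \<Rightarrow> rat"
    and s s' :: "nat \<Rightarrow> 'i" and k :: nat
  assumes "cartan_of_simple_lie_algebra C"
    and "is_min_symmetrizer C d"
    and "invariant_form C d form"
    and "in_I_infty s" and "in_I_infty s'"
    and "1 \<le> k"
    and "four_move C k s s'"
  shows "Lambda_matrix C form s' =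
         fst ((perm_pair (sigma (k+2)) \<circ> perm_pair (sigma k) \<circ> mutate k \<circ> mutate (k+1) \<circ> mutate k)
                (Lambda_matrix C form s, exch_matrix C s))"
proof -
  interpret fm C d form s s' k using assms by unfold_locales
  show ?thesis by (rule main)
qed

end
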